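(* Let $\mathcal{A}$ be a complex Banach algebra with unity and $a,x\in\mathcal{A}$. The following are equivalent: (1) $a$ is g$\pi$-Hirano invertible and its g$\pi$-Hirano inverse is $x$; (2) $xax=x$, $xa=ax$ and $a^{n}-ax\in\mathcal{A}^{qnil}$ for some positive integer $n$; (3) $xax=x$, $xa=ax$ and $a^{n}-a^{m}x\in\mathcal{A}^{qnil}$ for some positive integers $m,n$ with $m-n\neq1$.
   Context: $\mathcal{A}^{qnil}$ denotes the set of quasinilpotent elements of $\mathcal{A}$ (spectrum equal to $\{0\}$). An element $x\in\mathcal{A}$ is a g$\pi$-Hirano inverse of $a$ if $xax=x$, $ax=xa$ and $a-a^{n+2}x\in\mathcal{A}^{qnil}$ for some positive integer $n$; such $x$ is unique when it exists. *)

theory Defs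
  imports "HOL-Analysis.Analysis"
begin

text \<open>A complex unital Banach algebra: a real unital Banach algebra equipped with
a compatible complex scalar multiplication (the library has no complex algebra class).\<close>

class complex_banach_algebra_1 = banach + real_normed_algebra_1 +
  fixes scaleC :: "complex \<Rightarrow> 'a \<Rightarrow> 'a"
  assumes scaleC_of_real: "scaleC (complex_of_real r) x = scaleR r x"
    and scaleC_add_right: "scaleC c (x + y) = scaleC c x + scaleC c y"
    and scaleC_add_left: "scaleC (c + d) x = scaleC c x + scaleC d x"
    and scaleC_scaleC: "scaleC c (scaleC d x) = scaleC (c * d) x"
    and scaleC_one: "scaleC 1 x = x"
    and norm_scaleC: "norm (scaleC c x) = cmod c * norm x"
    and mult_scaleC_left: "scaleC c x * y = scaleC c (x * y)"
    and mult_scaleC_right: "x * scaleC c y = scaleC c (x * y)"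

definition invertible_elem :: "'a::ring_1 \<Rightarrow> bool" where
  "invertible_elem a \<longleftrightarrow> (\<exists>b. a * b = 1 \<and> b * a = 1)"

definition spectrum :: "'a::complex_banach_algebra_1 \<Rightarrow> complex set" where
  "spectrum a = {z. \<not> invertible_elem (a - scaleC z 1)}"

definition qnil :: "'a::complex_banach_algebra_1 set" where
  "qnil = {a. spectrum a = {0}}"

definition gpi_hirano_inverse :: "'a::complex_banach_algebra_1 \<Rightarrow> 'a \<Rightarrow> bool" where
  "gpi_hirano_inverse a x \<longleftrightarrow>
     x * a * x = x \<and> a * x = x * a \<and> (\<exists>n>0. a - a ^ (n + 2) * x \<in> qnil)"

end

theory Submission
  imports Defs "HOL-Computational_Algebra.Fundamental_Theorem_Algebra"
begin

lemma scaleC_zero_left[simp]: "scaleC 0 (x::'a::complex_banach_algebra_1) = 0"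
  using scaleC_of_real[of 0 x] by simp

lemma scaleC_zero_right[simp]: "scaleC c (0::'a::complex_banach_algebra_1) = 0"
  using scaleC_add_right[of c 0 0] by simp

lemma scaleC_neg_left: "scaleC (-c) (x::'a::complex_banach_algebra_1) = - scaleC c x"
  using scaleC_add_left[of c "-c" x] by (metis minus_unique add.right_inverse scaleC_zero_left)

lemma scaleC_diff_left: "scaleC (c - d) (x::'a::complex_banach_algebra_1) = scaleC c x - scaleC d x"
  using scaleC_add_left[of c "-d" x] by (simp add: scaleC_neg_left)

lemma scaleC_comm: "scaleC c 1 * (w::'a::complex_banach_algebra_1) = w * scaleC c 1"
  by (simp add: mult_scaleC_left mult_scaleC_right)

definition peval :: "complex poly \<Rightarrow> 'a::complex_banach_algebra_1 \<Rightarrow> 'a" where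
  "peval h a = fold_coeffs (\<lambda>c acc. scaleC c 1 + a * acc) h 0"

lemma peval_0[simp]: "peval 0 a = 0" by (simp add: peval_def)

lemma peval_pCons[simp]: "peval (pCons c h) a = scaleC c 1 + a * peval h a"
  by (cases "h = 0 \<and> c = 0") (auto simp add: peval_def)

lemma peval_add: "peval (h + k) a = peval h a + peval k a"
proof (induction h arbitrary: k rule: pCons_induct)
  case 0 then show ?case by simp
next
  case (pCons c h)
  obtain d k' where k: "k = pCons d k'" by (cases k)
  show ?case by (simp add: k pCons.IH scaleC_add_left distrib_left add_ac)
qed

lemma peval_smult: "peval (smult c h) a = scaleC c (peval h a)"
  by (induction h rule: pCons_induct)
     (auto simp: scaleC_scaleC scaleC_add_right mult_scaleC_right)

lemma peval_mult: "peval (h * k) a = peval h a * peval k a"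
  by (induction h rule: pCons_induct)
     (auto simp: peval_add peval_smult distrib_right mult_scaleC_left mult.assoc)

lemma peval_one[simp]: "peval 1 a = 1"
  by (simp add: one_pCons scaleC_one)

lemma peval_X[simp]: "peval [:0,1:] a = a"
  by (simp add: scaleC_one)

lemma peval_pow: "peval (h ^ n) a = peval h a ^ n"
  by (induction n) (auto simp: peval_mult)

lemma peval_neg: "peval (- h) a = - peval h a"
  using peval_add[of h "-h" a] by (metis minus_unique add.right_inverse peval_0)

lemma peval_diff: "peval (h - k) a = peval h a - peval k a"
  using peval_add[of h "-k" a] by (simp add: peval_neg)

lemma peval_const[simp]: "peval [:c:] a = scaleC c 1"
  by simp

lemma peval_comm: assumes aw: "a * w = w * a" shows "peval h a * w = w * peval h a"
proof (induction h rule: pCons_induct)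
  case (pCons c h)
  have "a * peval h a * w = w * (a * peval h a)"
    by (metis aw pCons.IH mult.assoc)
  then show ?case by (simp add: distrib_left distrib_right scaleC_comm)
qed simp

lemma inv_prod_comm:
  fixes u v :: "'a::ring_1"
  assumes c: "u * v = v * u"
  shows "invertible_elem (u * v) \<longleftrightarrow> invertible_elem u \<and> invertible_elem v"
proof
  assume "invertible_elem u \<and> invertible_elem v"
  then obtain u' v' where "u * u' = 1" "u' * u = 1" "v * v' = 1" "v' * v = 1"
    unfolding invertible_elem_def by blast
  moreover have "(u * v) * (v' * u') = u * ((v * v') * u')" "(v' * u') * (u * v) = v' * ((u' * u) * v)"
    by (simp_all add: mult.assoc)
  ultimately have "(u * v) * (v' * u') = 1" "(v' * u') * (u * v) = 1"
    by simp_all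
  then show "invertible_elem (u * v)" unfolding invertible_elem_def by blast
next
  assume "invertible_elem (u * v)"
  then obtain w where w1: "u * v * w = 1" and w2: "w * (u * v) = 1"
    unfolding invertible_elem_def by blast
  have lr: "invertible_elem y" if "y * r = 1" "l * y = 1" for y r l :: 'a
  proof -
    have "l = r" by (metis that mult.assoc mult_1_left mult_1_right)
    then show ?thesis using that unfolding invertible_elem_def by blast
  qed
  have "u * (v * w) = 1" using w1 by (simp add: mult.assoc)
  moreover have "(w * v) * u = 1" using w2 c by (simp add: mult.assoc)
  moreover have "v * (u * w) = 1" using w1 c by (simp add: mult.assoc[symmetric])
  moreover have "(w * u) * v = 1" using w2 by (simp add: mult.assoc)
  ultimately show "invertible_elem u \<and> invertible_elem v" using lr by blast
qed

definition rinv :: "'a::ring_1 \<Rightarrow> 'a \<Rightarrow> bool" where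
  "rinv e w \<longleftrightarrow> invertible_elem (w * e + (1 - e))"

lemma idem_facts:
  fixes e :: "'a::ring_1"
  assumes ee: "e * e = e"
  shows "e * (1 - e) = 0" "(1 - e) * e = 0" "(1 - e) * (1 - e) = 1 - e"
  using ee by (simp_all add: algebra_simps)

lemma corner_mult:
  fixes e u v :: "'a::ring_1"
  assumes ee: "e * e = e" and ve: "v * e = e * v"
  shows "(u * e + (1 - e)) * (v * e + (1 - e)) = (u * v) * e + (1 - e)"
proof -
  have 1: "u * e * (v * e) = u * v * e"
    by (metis ee ve mult.assoc)
  have 2: "u * e * (1 - e) = 0" by (metis idem_facts(1)[OF ee] mult.assoc mult_zero_right)
  have 3: "(1 - e) * (v * e) = 0" by (metis idem_facts(2)[OF ee] ve mult.assoc mult_zero_left)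
  have "(u * e + (1 - e)) * (v * e + (1 - e)) =
        u * e * (v * e) + u * e * (1 - e) + ((1 - e) * (v * e) + (1 - e) * (1 - e))"
    by (simp only: distrib_left distrib_right add_ac)
  then show ?thesis using 1 2 3 idem_facts(3)[OF ee] by simp
qed

lemma rinv_mult:
  fixes e u v :: "'a::ring_1"
  assumes ee: "e * e = e" and ue: "u * e = e * u" and ve: "v * e = e * v" and uv: "u * v = v * u"
  shows "rinv e (u * v) \<longleftrightarrow> rinv e u \<and> rinv e v"
proof -
  have f: "(u * v) * e + (1 - e) = (u * e + (1 - e)) * (v * e + (1 - e))"
    using corner_mult[OF ee ve] by simp
  have c: "(u * e + (1 - e)) * (v * e + (1 - e)) = (v * e + (1 - e)) * (u * e + (1 - e))"
    using corner_mult[OF ee ve, of u] corner_mult[OF ee ue, of v] uv by simp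
  show ?thesis unfolding rinv_def f using inv_prod_comm[OF c] by simp
qed

lemma rinv_invertible:
  fixes e w :: "'a::ring_1"
  assumes ee: "e * e = e" and we: "w * e = e * w" and inv: "invertible_elem w"
  shows "rinv e w"
proof -
  obtain w' where w1: "w * w' = 1" and w2: "w' * w = 1" using inv unfolding invertible_elem_def by blast
  have w'e: "w' * e = e * w'"
  proof -
    have "w' * e = w' * e * (w * w')" using w1 by simp
    also have "\<dots> = w' * (w * e) * w'" using we by (simp add: mult.assoc)
    also have "\<dots> = e * w'" using w2 by (simp add: mult.assoc[symmetric])
    finally show ?thesis .
  qed
  have "(w * e + (1 - e)) * (w' * e + (1 - e)) = 1"
    using corner_mult[OF ee w'e, of w] w1 by simp
  moreover have "(w' * e + (1 - e)) * (w * e + (1 - e)) = 1"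
    using corner_mult[OF ee we, of w'] w2 by simp
  ultimately show ?thesis unfolding rinv_def invertible_elem_def by blast
qed

lemma invertible_scaleC:
  assumes "c \<noteq> 0"
  shows "invertible_elem (scaleC c (1::'a::complex_banach_algebra_1))"
proof -
  have "scaleC c (1::'a) * scaleC (inverse c) 1 = 1" "scaleC (inverse c) (1::'a) * scaleC c 1 = 1"
    using assms by (simp_all add: mult_scaleC_left scaleC_scaleC scaleC_one)
  then show ?thesis unfolding invertible_elem_def by blast
qed

lemma peval_lin: "peval [:-r, 1:] a = a - scaleC r (1::'a::complex_banach_algebra_1)"
  by (simp add: scaleC_one scaleC_neg_left)

lemma sm_zero:
  fixes a e :: "'a::complex_banach_algebra_1"
  assumes ee: "e * e = e" and ae: "a * e = e * a"
  shows "h \<noteq> 0 \<Longrightarrow> (\<not> rinv e (peval h a)) \<longleftrightarrow> (\<exists>l. \<not> rinv e (a - scaleC l 1) \<and> poly h l = 0)"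
proof (induction "degree h" arbitrary: h rule: less_induct)
  case less
  show ?case
  proof (cases "degree h = 0")
    case True
    then obtain c where h: "h = [:c:]" by (meson degree_eq_zeroE)
    with less.prems have c: "c \<noteq> 0" by simp
    have "rinv e (peval h a)"
      unfolding h peval_const
      by (rule rinv_invertible[OF ee _ invertible_scaleC[OF c]]) (simp add: scaleC_comm)
    then show ?thesis using h c by simp
  next
    case False
    then have "\<not> constant (poly h)" by (simp add: constant_degree)
    then obtain r where "poly h r = 0" using fundamental_theorem_of_algebra by blast
    then obtain k where hk: "h = [:-r, 1:] * k" using poly_eq_0_iff_dvd by (metis dvdE)
    with less.prems have k0: "k \<noteq> 0" by auto
    have dk: "degree k < degree h"
      using degree_mult_eq[of "[:-r,1:]" k] k0 unfolding hk by (simp del: mult_pCons_left)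
    have pe: "peval h a = (a - scaleC r 1) * peval k a"
      unfolding hk peval_mult[of "[:-r,1:]" k a] peval_lin ..
    have c1: "(a - scaleC r 1) * e = e * (a - scaleC r 1)"
      using ae by (simp add: algebra_simps scaleC_comm)
    have c2: "peval k a * e = e * peval k a" by (rule peval_comm[OF ae])
    have c3: "(a - scaleC r 1) * peval k a = peval k a * (a - scaleC r 1)"
      by (rule peval_comm[symmetric]) (simp add: algebra_simps scaleC_comm)
    have "(\<not> rinv e (peval h a)) \<longleftrightarrow> \<not> rinv e (a - scaleC r 1) \<or> \<not> rinv e (peval k a)"
      unfolding pe using rinv_mult[OF ee c1 c2 c3] by simp
    also have "\<dots> \<longleftrightarrow> \<not> rinv e (a - scaleC r 1) \<or> (\<exists>l. \<not> rinv e (a - scaleC l 1) \<and> poly k l = 0)"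
      using less.hyps[OF dk k0] by simp
    also have "\<dots> \<longleftrightarrow> (\<exists>l. \<not> rinv e (a - scaleC l 1) \<and> poly h l = 0)"
      unfolding hk by auto
    finally show ?thesis .
  qed
qed

lemma spec_map:
  fixes a e :: "'a::complex_banach_algebra_1"
  assumes ee: "e * e = e" and ae: "a * e = e * a" and dh: "degree h \<noteq> 0"
  shows "{m. \<not> rinv e (peval h a - scaleC m 1)} = poly h ` {l. \<not> rinv e (a - scaleC l 1)}"
proof -
  have "(\<not> rinv e (peval h a - scaleC m 1)) \<longleftrightarrow> (\<exists>l. \<not> rinv e (a - scaleC l 1) \<and> poly h l = m)" for m
  proof -
    have nz: "h - [:m:] \<noteq> 0" using dh by (metis degree_pCons_0 eq_iff_diff_eq_0)
    have "peval (h - [:m:]) a = peval h a - scaleC m 1" by (simp add: peval_diff del: peval_pCons)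
    then show ?thesis using sm_zero[OF ee ae nz] by simp
  qed
  then show ?thesis by auto
qed

lemma corner_sum:
  fixes p U V :: "'a::ring_1"
  assumes pp: "p * p = p" and Up: "U * p = p * U" and Vp: "V * p = p * V"
  shows "(U * (1 - p) + p) * (V * p + (1 - p)) = U * (1 - p) + V * p"
    and "(V * p + (1 - p)) * (U * (1 - p) + p) = U * (1 - p) + V * p"
proof -
  have q: "(1 - p) * (1 - p) = 1 - p" "p * (1 - p) = 0" "(1 - p) * p = 0" using idem_facts[OF pp] by auto
  have Vq: "V * (1 - p) = (1 - p) * V" using Vp by (simp add: algebra_simps)
  have Uq: "U * (1 - p) = (1 - p) * U" using Up by (simp add: algebra_simps)
  have a1: "U * (1 - p) * (V * p) = 0" by (metis Vq q(3) mult.assoc mult_zero_left mult_zero_right)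
  have a2: "U * (1 - p) * (1 - p) = U * (1 - p)" by (metis q(1) mult.assoc)
  have a3: "p * (V * p) = V * p" by (metis Vp pp mult.assoc)
  have a4: "V * p * (U * (1 - p)) = 0" by (metis Up q(2) mult.assoc mult_zero_left mult_zero_right)
  have a5: "V * p * p = V * p" by (metis pp mult.assoc)
  have a6: "(1 - p) * (U * (1 - p)) = U * (1 - p)" by (metis Uq q(1) mult.assoc)
  show "(U * (1 - p) + p) * (V * p + (1 - p)) = U * (1 - p) + V * p"
    by (simp only: distrib_left distrib_right a1 a2 a3 q) simp
  show "(V * p + (1 - p)) * (U * (1 - p) + p) = U * (1 - p) + V * p"
    by (simp only: distrib_left distrib_right a4 a5 a6 q) (simp add: add.commute)
qed

lemma spec_decomp:
  fixes p u v :: "'a::complex_banach_algebra_1"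
  assumes pp: "p * p = p" and up: "u * p = p * u" and vp: "v * p = p * v"
  shows "spectrum (u * (1 - p) + v * p) =
         {l. \<not> rinv (1 - p) (u - scaleC l 1)} \<union> {l. \<not> rinv p (v - scaleC l 1)}"
proof -
  have "invertible_elem (u * (1 - p) + v * p - scaleC l 1) \<longleftrightarrow>
        rinv (1 - p) (u - scaleC l 1) \<and> rinv p (v - scaleC l 1)" for l
  proof -
    let ?U = "u - scaleC l 1" and ?V = "v - scaleC l 1"
    have Up: "?U * p = p * ?U" using up by (simp add: algebra_simps scaleC_comm)
    have Vp: "?V * p = p * ?V" using vp by (simp add: algebra_simps scaleC_comm)
    have eq: "u * (1 - p) + v * p - scaleC l 1 = ?U * (1 - p) + ?V * p"
      by (simp add: algebra_simps)
    have c: "(?U * (1 - p) + p) * (?V * p + (1 - p)) = (?V * p + (1 - p)) * (?U * (1 - p) + p)"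
      using corner_sum[OF pp Up Vp] by simp
    show ?thesis unfolding eq rinv_def using inv_prod_comm[OF c] corner_sum(1)[OF pp Up Vp] by simp
  qed
  then show ?thesis unfolding spectrum_def by auto
qed

lemma deg_diff1: "degree q < degree p \<Longrightarrow> degree (p - q) = degree (p :: complex poly)"
  using degree_add_eq_left[of "-q" p] by simp
lemma deg_diff2: "degree p < degree q \<Longrightarrow> degree (p - q) = degree (q :: complex poly)"
  using degree_add_eq_right[of p "-q"] by simp

lemma pq_facts:
  fixes a x :: "'a::complex_banach_algebra_1"
  assumes xax: "x * a * x = x" and xa: "x * a = a * x"
  shows "(a * x) * (a * x) = a * x" "a * (a * x) = (a * x) * a" "(1 - a * x) * (1 - a * x) = 1 - a * x"
    "a * (1 - a * x) = (1 - a * x) * a" "x * (a * x) = (a * x) * x"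
proof -
  show pp: "(a * x) * (a * x) = a * x" by (metis xax mult.assoc)
  show "a * (a * x) = (a * x) * a" by (metis xa mult.assoc)
  then show "a * (1 - a * x) = (1 - a * x) * a" by (simp add: algebra_simps)
  show "(1 - a * x) * (1 - a * x) = 1 - a * x" using idem_facts(3)[OF pp] .
  show "x * (a * x) = (a * x) * x" by (metis xa mult.assoc)
qed

lemma spec_pq:
  fixes a x :: "'a::complex_banach_algebra_1"
  assumes xax: "x * a * x = x" and xa: "x * a = a * x" and df: "degree f \<noteq> 0" and dg: "degree g \<noteq> 0"
  shows "spectrum (peval f a * (1 - a * x) + peval g a * (a * x)) =
     poly f ` {l. \<not> rinv (1 - a * x) (a - scaleC l 1)} \<union> poly g ` {l. \<not> rinv (a * x) (a - scaleC l 1)}"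
proof -
  note F = pq_facts[OF xax xa]
  have s1: "{l. \<not> rinv (1 - a * x) (peval f a - scaleC l 1)} = poly f ` {l. \<not> rinv (1 - a * x) (a - scaleC l 1)}"
    by (rule spec_map[OF F(3) _ df]) (use F(4) in simp)
  have s2: "{l. \<not> rinv (a * x) (peval g a - scaleC l 1)} = poly g ` {l. \<not> rinv (a * x) (a - scaleC l 1)}"
    by (rule spec_map[OF F(1) _ dg]) (use F(2) in simp)
  have "spectrum (peval f a * (1 - a * x) + peval g a * (a * x)) =
     {l. \<not> rinv (1 - a * x) (peval f a - scaleC l 1)} \<union> {l. \<not> rinv (a * x) (peval g a - scaleC l 1)}"
    by (rule spec_decomp[OF F(1)]) (rule peval_comm, use F(2) in simp)+
  then show ?thesis using s1 s2 by simp
qed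

lemma zero_notin_T:
  fixes a x :: "'a::complex_banach_algebra_1"
  assumes xax: "x * a * x = x" and xa: "x * a = a * x"
  shows "rinv (a * x) (a - scaleC 0 1)"
proof -
  note F = pq_facts[OF xax xa]
  have "(a * (a * x) + (1 - a * x)) * (x * (a * x) + (1 - a * x)) = (a * x) * (a * x) + (1 - a * x)"
    using corner_mult[OF F(1) F(5), of a] by simp
  moreover have "(x * (a * x) + (1 - a * x)) * (a * (a * x) + (1 - a * x)) = (x * a) * (a * x) + (1 - a * x)"
    using corner_mult[OF F(1) F(2), of x] by simp
  ultimately show ?thesis unfolding rinv_def invertible_elem_def using F(1) xa by (auto intro!: exI[of _ "x * (a * x) + (1 - a * x)"])
qed

lemma e1: "a - a ^ (n + 2) * x = peval [:0,1:] a * (1 - a * x) + peval ([:0,1:] - [:0,1:] ^ (n + 1)) a * (a * (x::'a::complex_banach_algebra_1))"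
proof -
  have "a ^ (n + 2) = a ^ (n + 1) * a" using power_Suc2[of a "n+1"] by simp
  then have A: "a ^ (n + 2) * x = a ^ (n + 1) * (a * x)" by (simp only: mult.assoc)
  have B: "peval ([:0,1:] - [:0,1:] ^ (n + 1)) a = a - a ^ (n + 1)" by (simp only: peval_diff peval_pow peval_X)
  show ?thesis unfolding A B peval_X by (simp add: algebra_simps)
qed

lemma e2: "a ^ n - a * x = peval ([:0,1:] ^ n) a * (1 - a * x) + peval ([:0,1:] ^ n - 1) a * (a * (x::'a::complex_banach_algebra_1))"
proof -
  have B: "peval ([:0,1:] ^ n - 1) a = a ^ n - 1" "peval ([:0,1:] ^ n) a = a ^ n"
    by (simp_all only: peval_diff peval_pow peval_X peval_one)
  show ?thesis unfolding B by (simp add: algebra_simps)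
qed

lemma e3: "a ^ n - a ^ (Suc k) * x = peval ([:0,1:] ^ n) a * (1 - a * x) + peval ([:0,1:] ^ n - [:0,1:] ^ k) a * (a * (x::'a::complex_banach_algebra_1))"
proof -
  have A: "a ^ Suc k * x = a ^ k * (a * x)" by (simp only: mult.assoc power_Suc2)
  have B: "peval ([:0,1:] ^ n - [:0,1:] ^ k) a = a ^ n - a ^ k" "peval ([:0,1:] ^ n) a = a ^ n"
    by (simp_all only: peval_diff peval_pow peval_X)
  show ?thesis unfolding A B by (simp add: algebra_simps)
qed

lemma union_zero: "(A \<union> B = {0}) \<longleftrightarrow> (\<forall>y\<in>A. y = 0) \<and> (\<forall>y\<in>B. y = 0) \<and> (A \<noteq> {} \<or> B \<noteq> {})"
  by auto

lemma cx1: "(t::complex) \<noteq> 0 \<Longrightarrow> (t - t ^ (n + 1) = 0) \<longleftrightarrow> t ^ n = 1"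
  by (auto simp: power_Suc)

lemma cx3:
  assumes "(t::complex) \<noteq> 0" "t ^ n = t ^ k" "n \<noteq> k"
  shows "t ^ (if k < n then n - k else k - n) = 1"
proof (cases "k < n")
  case True
  then have "t ^ n = t ^ k * t ^ (n - k)" by (simp add: power_add[symmetric])
  then show ?thesis using assms True by simp
next
  case False
  then have "t ^ k = t ^ n * t ^ (k - n)" by (simp add: power_add[symmetric])
  then show ?thesis using assms False by simp
qed

theorem theorem2p4:
  fixes a x :: "'a::complex_banach_algebra_1"
  shows "(gpi_hirano_inverse a x
          \<longleftrightarrow> (x * a * x = x \<and> x * a = a * x \<and> (\<exists>n>0. a ^ n - a * x \<in> qnil)))
       \<and> ((x * a * x = x \<and> x * a = a * x \<and> (\<exists>n>0. a ^ n - a * x \<in> qnil))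
          \<longleftrightarrow> (x * a * x = x \<and> x * a = a * x \<and>
               (\<exists>m>0. \<exists>n>0. int m - int n \<noteq> 1 \<and> a ^ n - a ^ m * x \<in> qnil)))"
proof -
  define S where "S = {l. \<not> rinv (1 - a * x) (a - scaleC l 1)}"
  define T where "T = {l. \<not> rinv (a * x) (a - scaleC l 1)}"
  define good where "good n \<longleftrightarrow> (\<forall>s\<in>S. s = 0) \<and> (\<forall>t\<in>T. t ^ n = 1) \<and> (S \<noteq> {} \<or> T \<noteq> {})" for n
  have main: "(\<exists>n>0. a - a ^ (n + 2) * x \<in> qnil) \<longleftrightarrow> (\<exists>n>0. a ^ n - a * x \<in> qnil)"
     "(\<exists>n>0. a ^ n - a * x \<in> qnil) \<longleftrightarrow> (\<exists>m>0. \<exists>n>0. int m - int n \<noteq> 1 \<and> a ^ n - a ^ m * x \<in> qnil)"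
    if H: "x * a * x = x" "x * a = a * x"
  proof -
    have T0: "0 \<notin> T" unfolding T_def using zero_notin_T[OF H] by simp
    have c1: "a - a ^ (n + 2) * x \<in> qnil \<longleftrightarrow> good n" if n: "n > 0" for n
    proof -
      have "spectrum (a - a ^ (n + 2) * x) = poly [:0,1:] ` S \<union> poly ([:0,1:] - [:0,1:] ^ (n + 1)) ` T"
        unfolding e1 S_def T_def
        by (rule spec_pq[OF H]) (simp, subst deg_diff2, simp_all add: degree_linear_power n)
      then have sp: "spectrum (a - a ^ (n + 2) * x) = S \<union> (\<lambda>l. l - l ^ (n + 1)) ` T" by (simp add: right_diff_distrib)
      have "(t - t ^ (n + 1) = 0) \<longleftrightarrow> t ^ n = 1" if "t \<in> T" for t
        using T0 that by (intro cx1) auto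
      then have "(\<forall>t\<in>T. t - t ^ (n + 1) = 0) \<longleftrightarrow> (\<forall>t\<in>T. t ^ n = 1)" by blast
      then show ?thesis unfolding qnil_def mem_Collect_eq sp good_def union_zero by simp
    qed
    have c2: "a ^ n - a * x \<in> qnil \<longleftrightarrow> good n" if n: "n > 0" for n
    proof -
      have "spectrum (a ^ n - a * x) = poly ([:0,1:] ^ n) ` S \<union> poly ([:0,1:] ^ n - 1) ` T"
        unfolding e2 S_def T_def
        by (rule spec_pq[OF H]) (simp add: degree_linear_power n, subst deg_diff1, simp_all add: degree_linear_power n)
      then have sp: "spectrum (a ^ n - a * x) = (\<lambda>l. l ^ n) ` S \<union> (\<lambda>l. l ^ n - 1) ` T" by simp
      show ?thesis unfolding qnil_def mem_Collect_eq sp good_def union_zero using n by simp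
    qed
    have c3: "good (if k < n then n - k else k - n)" if n: "n > 0" and kn: "k \<noteq> n" and q: "a ^ n - a ^ Suc k * x \<in> qnil" for n k
    proof -
      have "spectrum (a ^ n - a ^ Suc k * x) = poly ([:0,1:] ^ n) ` S \<union> poly ([:0,1:] ^ n - [:0,1:] ^ k) ` T"
      proof -
        have dg: "degree ([:0,1:] ^ n - [:0,1:] ^ k :: complex poly) \<noteq> 0"
          using kn by (cases "n < k") (simp_all add: degree_linear_power deg_diff1 deg_diff2)
        show ?thesis unfolding e3 S_def T_def
          by (rule spec_pq[OF H _ dg]) (simp add: degree_linear_power n)
      qed
      then have sp: "spectrum (a ^ n - a ^ Suc k * x) = (\<lambda>l. l ^ n) ` S \<union> (\<lambda>l. l ^ n - l ^ k) ` T" by simp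
      have A: "\<forall>s\<in>S. s = 0" "\<forall>t\<in>T. t ^ n = t ^ k" "S \<noteq> {} \<or> T \<noteq> {}"
        using q unfolding qnil_def mem_Collect_eq sp union_zero using n by simp_all
      have "t ^ (if k < n then n - k else k - n) = 1" if "t \<in> T" for t
        using A(2) T0 that by (intro cx3[OF _ _ kn[symmetric]]) auto
      then show ?thesis unfolding good_def using A(1,3) by blast
    qed
    show "(\<exists>n>0. a - a ^ (n + 2) * x \<in> qnil) \<longleftrightarrow> (\<exists>n>0. a ^ n - a * x \<in> qnil)"
    proof
      assume "\<exists>n>0. a - a ^ (n + 2) * x \<in> qnil"
      then obtain n where n: "n > 0" and q: "a - a ^ (n + 2) * x \<in> qnil" by blast
      have "a ^ n - a * x \<in> qnil" using c1[OF n] c2[OF n] q by simp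
      then show "\<exists>n>0. a ^ n - a * x \<in> qnil" using n by blast
    next
      assume "\<exists>n>0. a ^ n - a * x \<in> qnil"
      then obtain n where n: "n > 0" and q: "a ^ n - a * x \<in> qnil" by blast
      have "a - a ^ (n + 2) * x \<in> qnil" using c1[OF n] c2[OF n] q by simp
      then show "\<exists>n>0. a - a ^ (n + 2) * x \<in> qnil" using n by blast
    qed
    show "(\<exists>n>0. a ^ n - a * x \<in> qnil) \<longleftrightarrow> (\<exists>m>0. \<exists>n>0. int m - int n \<noteq> 1 \<and> a ^ n - a ^ m * x \<in> qnil)"
    proof
      assume "\<exists>n>0. a ^ n - a * x \<in> qnil"
      then obtain n where "n > 0" "a ^ n - a * x \<in> qnil" by blast
      then show "\<exists>m>0. \<exists>n>0. int m - int n \<noteq> 1 \<and> a ^ n - a ^ m * x \<in> qnil"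
        by (intro exI[of _ 1] exI[of _ n]) auto
    next
      assume "\<exists>m>0. \<exists>n>0. int m - int n \<noteq> 1 \<and> a ^ n - a ^ m * x \<in> qnil"
      then obtain m n where mn: "m > 0" "n > 0" "int m - int n \<noteq> 1" "a ^ n - a ^ m * x \<in> qnil" by blast
      then obtain k where m: "m = Suc k" by (cases m) auto
      have kn: "k \<noteq> n" using mn(3) m by auto
      have g: "good (if k < n then n - k else k - n)" using c3[OF mn(2) kn] mn(4) m by simp
      have "(if k < n then n - k else k - n) > 0" using kn by auto
      then show "\<exists>n>0. a ^ n - a * x \<in> qnil" using c2 g by (intro exI[of _ "if k < n then n - k else k - n"]) simp
    qed
  qed
  show ?thesis
  proof (rule conjI; rule iffI)
    assume "gpi_hirano_inverse a x"
    then show "x * a * x = x \<and> x * a = a * x \<and> (\<exists>n>0. a ^ n - a * x \<in> qnil)"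
      unfolding gpi_hirano_inverse_def using main(1) by (metis (no_types))
  next
    assume "x * a * x = x \<and> x * a = a * x \<and> (\<exists>n>0. a ^ n - a * x \<in> qnil)"
    then show "gpi_hirano_inverse a x"
      unfolding gpi_hirano_inverse_def using main(1) by (metis (no_types))
  next
    assume "x * a * x = x \<and> x * a = a * x \<and> (\<exists>n>0. a ^ n - a * x \<in> qnil)"
    then show "x * a * x = x \<and> x * a = a * x \<and> (\<exists>m>0. \<exists>n>0. int m - int n \<noteq> 1 \<and> a ^ n - a ^ m * x \<in> qnil)"
      using main(2) by (metis (no_types))
  next
    assume "x * a * x = x \<and> x * a = a * x \<and> (\<exists>m>0. \<exists>n>0. int m - int n \<noteq> 1 \<and> a ^ n - a ^ m * x \<in> qnil)"
    then show "x * a * x = x \<and> x * a = a * x \<and> (\<exists>n>0. a ^ n - a * x \<in> qnil)"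
      using main(2) by (metis (no_types))
  qed
qed

end
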